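(* Let $X$ be a complete abelian metric group and let $f:X\to\mathbb{R}$ be a subadditive function bounded above on a set $T\subset X$ such that for some $k\in\mathbb{N}$ the $k$-fold sum $\sum_{i=1}^k T$ is either universally Baire and not Haar-meagre, or universally measurable and not Haar-null. Then $f$ is locally bounded at each point of $X$.
   Context: A complete abelian metric group is an abelian topological group with an invariant metric that is complete. A function $f$ is subadditive if $f(x+y)\le f(x)+f(y)$ for all $x,y$. The $k$-fold sum is $\sum_{i=1}^kT=\{t_1+\dots+t_k:t_i\in T\}$. A set $A\subset X$ is universally measurable if it is measurable with respect to every complete Borel probability measure on $X$; a universally measurable set $B$ is Haar-null if there is a $\sigma$-additive Borel probability measure $\mu$ on $X$ with $\mu(B+x)=0$ for all $x\in X$. A set $A\subset X$ is universally Baire if for every continuous map $g:K\to X$ from a compact metric space $K$ the set $g^{-1}(A+x)$ has the Baire property in $K$ for every $x\in X$; a universally Baire set $B$ is Haar-meagre if there is a continuous map $g:K\to X$ from a non-empty compact metric space $K$ such that $g^{-1}(B+x)$ is meagre in $K$ for every $x\in X$. Locally bounded at a point means $|f|$ is bounded on some neighbourhood of that point. *)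

theory Defs
  imports "HOL-Probability.Probability"
begin

definition translate :: "'a::ab_group_add set \<Rightarrow> 'a \<Rightarrow> 'a set" where
  "translate A x = (\<lambda>a. a + x) ` A"

definition kfold_sum :: "nat \<Rightarrow> 'a::ab_group_add set \<Rightarrow> 'a set" where
  "kfold_sum k T = {(\<Sum>i<k. t i) | t. \<forall>i<k. t i \<in> T}"

definition subadditive :: "('a::plus \<Rightarrow> real) \<Rightarrow> bool" where
  "subadditive f \<longleftrightarrow> (\<forall>x y. f (x + y) \<le> f x + f y)"

text \<open>Complete abelian metric group: abelian group with a complete invariant metric
  (invariance implies that the group operations are continuous).\<close>
definition invariant_metric :: "'a::{ab_group_add, metric_space} itself \<Rightarrow> bool" where
  "invariant_metric _ \<longleftrightarrow> (\<forall>x y z::'a. dist (x + z) (y + z) = dist x y)"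

definition nowhere_dense_in :: "'k topology \<Rightarrow> 'k set \<Rightarrow> bool" where
  "nowhere_dense_in K S \<longleftrightarrow> S \<subseteq> topspace K \<and> K interior_of (K closure_of S) = {}"

definition meagre_in :: "'k topology \<Rightarrow> 'k set \<Rightarrow> bool" where
  "meagre_in K S \<longleftrightarrow> S \<subseteq> topspace K \<and>
     (\<exists>N :: nat \<Rightarrow> 'k set. (\<forall>n. nowhere_dense_in K (N n)) \<and> S \<subseteq> (\<Union>n. N n))"

definition baire_property_in :: "'k topology \<Rightarrow> 'k set \<Rightarrow> bool" where
  "baire_property_in K S \<longleftrightarrow> S \<subseteq> topspace K \<and>
     (\<exists>U. openin K U \<and> meagre_in K ((S - U) \<union> (U - S)))"

text \<open>Compact metric spaces are represented (up to homeomorphism) by compact metrizable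
  topologies on subsets of the reals; every compact metric space has cardinality at most
  the continuum, so this loses no generality.\<close>
definition compact_metric_space :: "real topology \<Rightarrow> bool" where
  "compact_metric_space K \<longleftrightarrow> compact_space K \<and> metrizable_space K"

definition universally_Baire :: "'a::{ab_group_add, metric_space} set \<Rightarrow> bool" where
  "universally_Baire A \<longleftrightarrow>
     (\<forall>K g. compact_metric_space K \<longrightarrow> continuous_map K euclidean g \<longrightarrow>
        (\<forall>x. baire_property_in K {k \<in> topspace K. g k \<in> translate A x}))"

definition Haar_meagre :: "'a::{ab_group_add, metric_space} set \<Rightarrow> bool" where
  "Haar_meagre B \<longleftrightarrow> universally_Baire B \<and>
     (\<exists>K g. compact_metric_space K \<and> topspace K \<noteq> {} \<and> continuous_map K euclidean g \<and>
        (\<forall>x. meagre_in K {k \<in> topspace K. g k \<in> translate B x}))"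

definition borel_prob :: "'a::topological_space measure \<Rightarrow> bool" where
  "borel_prob \<mu> \<longleftrightarrow> sets \<mu> = sets borel \<and> prob_space \<mu>"

definition universally_measurable :: "'a::{ab_group_add, metric_space} set \<Rightarrow> bool" where
  "universally_measurable A \<longleftrightarrow> (\<forall>\<mu>. borel_prob \<mu> \<longrightarrow> A \<in> sets (completion \<mu>))"

definition Haar_null :: "'a::{ab_group_add, metric_space} set \<Rightarrow> bool" where
  "Haar_null B \<longleftrightarrow> universally_measurable B \<and>
     (\<exists>\<mu>. borel_prob \<mu> \<and> (\<forall>x. emeasure (completion \<mu>) (translate B x) = 0))"

definition locally_bounded_at :: "('a::topological_space \<Rightarrow> real) \<Rightarrow> 'a \<Rightarrow> bool" where
  "locally_bounded_at f p \<longleftrightarrow> (\<exists>U M. open U \<and> p \<in> U \<and> (\<forall>y\<in>U. \<bar>f y\<bar> \<le> M))"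

end

theory Submission
  imports Defs
begin


lemma meagre_in_subset: "meagre_in K S \<Longrightarrow> T \<subseteq> S \<Longrightarrow> meagre_in K T"
  unfolding meagre_in_def by blast

lemma meagre_in_UN:
  assumes "\<And>k::nat. meagre_in K (S k)"
  shows "meagre_in K (\<Union>k. S k)"
proof -
  from assms have "\<forall>k. \<exists>N :: nat \<Rightarrow> _. (\<forall>n. nowhere_dense_in K (N n)) \<and> S k \<subseteq> (\<Union>n. N n)"
    unfolding meagre_in_def by blast
  from choice[OF this] obtain N :: "nat \<Rightarrow> nat \<Rightarrow> _" where N: "\<And>k n. nowhere_dense_in K (N k n)" "\<And>k. S k \<subseteq> (\<Union>n. N k n)"
    by blast
  define N' where "N' m = N (fst (prod_decode m)) (snd (prod_decode m))" for m
  have "(\<Union>k. S k) \<subseteq> (\<Union>m. N' m)"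
  proof
    fix x assume "x \<in> (\<Union>k. S k)"
    then obtain k n where "x \<in> N k n" using N(2) by blast
    then have "x \<in> N' (prod_encode (k,n))" by (simp add: N'_def)
    then show "x \<in> (\<Union>m. N' m)" by blast
  qed
  moreover have "\<And>m. nowhere_dense_in K (N' m)" using N(1) by (simp add: N'_def)
  moreover have "(\<Union>k. S k) \<subseteq> topspace K" using assms unfolding meagre_in_def by blast
  ultimately show ?thesis unfolding meagre_in_def by blast
qed

lemma meagre_in_Un: "meagre_in K S \<Longrightarrow> meagre_in K T \<Longrightarrow> meagre_in K (S \<union> T)"
proof -
  assume a: "meagre_in K S" "meagre_in K T"
  have "meagre_in K (\<Union>k::nat. if k = 0 then S else T)"
    by (rule meagre_in_UN) (use a in auto)
  moreover have "(\<Union>k::nat. if k = 0 then S else T) = S \<union> T"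
  proof
    show "(\<Union>k::nat. if k = 0 then S else T) \<subseteq> S \<union> T" by (auto split: if_splits)
    show "S \<union> T \<subseteq> (\<Union>k::nat. if k = 0 then S else T)"
    proof
      fix x assume "x \<in> S \<union> T"
      then show "x \<in> (\<Union>k::nat. if k = 0 then S else T)"
      proof
        assume "x \<in> S" then show ?thesis by (intro UN_I[of 0]) auto
      next
        assume "x \<in> T" then show ?thesis by (intro UN_I[of 1]) auto
      qed
    qed
  qed
  ultimately show ?thesis by simp
qed

lemma nowhere_dense_imp_meagre: "nowhere_dense_in K S \<Longrightarrow> meagre_in K S"
proof -
  assume a: "nowhere_dense_in K S"
  then have "S \<subseteq> topspace K" by (simp add: nowhere_dense_in_def)
  moreover have "(\<forall>n::nat. nowhere_dense_in K ((\<lambda>_. S) n)) \<and> S \<subseteq> (\<Union>n::nat. (\<lambda>_. S) n)" using a by simp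
  ultimately show ?thesis unfolding meagre_in_def by (intro conjI exI[of _ "\<lambda>_::nat. S"]) auto
qed

lemma meagre_open_empty:
  assumes "completely_metrizable_space K"
    and "meagre_in K S" "openin K U" "U \<subseteq> S"
  shows "U = {}"
proof -
  obtain N :: "nat \<Rightarrow> _" where N: "\<And>n. nowhere_dense_in K (N n)" "S \<subseteq> (\<Union>n. N n)"
    using assms(2) unfolding meagre_in_def by blast
  have "K interior_of \<Union>(range (\<lambda>n. K closure_of N n)) = {}"
  proof (rule Baire_category_alt)
    show "completely_metrizable_space K \<or> locally_compact_space K \<and> regular_space K"
      using assms(1) by simp
    show "countable (range (\<lambda>n. K closure_of N n))" by simp
    fix T assume "T \<in> range (\<lambda>n. K closure_of N n)"
    then obtain n where "T = K closure_of N n" by blast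
    then show "closedin K T \<and> K interior_of T = {}"
      using N(1)[of n] by (simp add: nowhere_dense_in_def)
  qed
  moreover have "U \<subseteq> \<Union>(range (\<lambda>n. K closure_of N n))"
  proof
    fix x assume x: "x \<in> U"
    then have "x \<in> (\<Union>n. N n)" using assms(4) N(2) by (meson subsetD)
    then obtain n where n: "x \<in> N n" by (meson UN_E)
    have "N n \<subseteq> topspace K" using N(1)[of n] by (simp add: nowhere_dense_in_def)
    then have "x \<in> K closure_of N n" using closure_of_subset n by (meson subsetD)
    then show "x \<in> \<Union>(range (\<lambda>n. K closure_of N n))" by (meson UN_I UNIV_I)
  qed
  ultimately show ?thesis using interior_of_maximal[OF _ assms(3)] by (metis subset_empty)
qed

lemma nowhere_dense_homeo:
  assumes h: "homeomorphic_map X Y f" and nd: "nowhere_dense_in X S"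
  shows "nowhere_dense_in Y (f ` S)"
proof -
  have S: "S \<subseteq> topspace X" using nd by (simp add: nowhere_dense_in_def)
  have sur: "f ` topspace X = topspace Y" using h homeomorphic_imp_surjective_map by blast
  have "Y closure_of (f ` S) = f ` (X closure_of S)" by (rule homeomorphic_map_closure_of[OF h S])
  then have "Y interior_of (Y closure_of (f ` S)) = f ` (X interior_of (X closure_of S))"
    using homeomorphic_map_interior_of[OF h closure_of_subset_topspace] by simp
  moreover have "X interior_of (X closure_of S) = {}" using nd by (simp add: nowhere_dense_in_def)
  moreover have "f ` S \<subseteq> topspace Y" using S sur by blast
  ultimately show ?thesis unfolding nowhere_dense_in_def by simp
qed

lemma meagre_homeo:
  assumes h: "homeomorphic_map X Y f" and m: "meagre_in X S"
  shows "meagre_in Y (f ` S)"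
proof -
  obtain N :: "nat \<Rightarrow> _" where N: "\<And>n. nowhere_dense_in X (N n)" "S \<subseteq> (\<Union>n. N n)"
    using m unfolding meagre_in_def by blast
  have sur: "f ` topspace X = topspace Y" using h homeomorphic_imp_surjective_map by blast
  have "\<And>n. nowhere_dense_in Y (f ` N n)" using nowhere_dense_homeo[OF h N(1)] .
  moreover have "f ` S \<subseteq> (\<Union>n. f ` N n)" using N(2) by blast
  moreover have "S \<subseteq> topspace X" using m by (simp add: meagre_in_def)
  then have "f ` S \<subseteq> topspace Y" using sur by blast
  ultimately show ?thesis unfolding meagre_in_def by (intro conjI exI[of _ "\<lambda>n. f ` N n"]) auto
qed

lemma baire_property_homeo:
  assumes h: "homeomorphic_map X Y f" and b: "baire_property_in X S"
  shows "baire_property_in Y (f ` S)"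
proof -
  obtain U where U: "openin X U" "meagre_in X ((S - U) \<union> (U - S))" and S: "S \<subseteq> topspace X"
    using b unfolding baire_property_in_def by blast
  have sur: "f ` topspace X = topspace Y" using h homeomorphic_imp_surjective_map by blast
  have inj: "inj_on f (topspace X)" using h homeomorphic_imp_injective_map by blast
  have Ut: "U \<subseteq> topspace X" using U(1) openin_subset by blast
  have "openin Y (f ` U)" using homeomorphic_map_openness[OF h Ut] U(1) by simp
  moreover have "(f ` S - f ` U) \<union> (f ` U - f ` S) = f ` ((S - U) \<union> (U - S))"
  proof -
    have "\<And>a b. a \<in> topspace X \<Longrightarrow> b \<in> topspace X \<Longrightarrow> f a = f b \<Longrightarrow> a = b"
      using inj by (simp add: inj_on_def)
    then show ?thesis using S Ut by (auto; metis subsetD)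
  qed
  moreover have "meagre_in Y (f ` ((S - U) \<union> (U - S)))" by (rule meagre_homeo[OF h U(2)])
  moreover have "f ` S \<subseteq> topspace Y" using S sur by blast
  ultimately show ?thesis unfolding baire_property_in_def by metis
qed


definition PT :: "(nat \<Rightarrow> bool) topology" where
  "PT = product_topology (\<lambda>_. discrete_topology (UNIV::bool set)) UNIV"

definition flipc :: "nat \<Rightarrow> (nat \<Rightarrow> bool) \<Rightarrow> nat \<Rightarrow> bool" where
  "flipc n w = w(n := \<not> w n)"

lemma flipc_flipc[simp]: "flipc n (flipc n w) = w"
  by (auto simp: flipc_def)

lemma flipc_apply: "flipc n w i = (if i = n then \<not> w n else w i)"
  by (simp add: flipc_def)

lemma topspace_PT[simp]: "topspace PT = UNIV"
  by (simp add: PT_def)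

lemma cm_PT: "completely_metrizable_space PT"
  unfolding PT_def
  by (subst completely_metrizable_space_product_topology)
     (simp add: completely_metrizable_space_discrete_topology)

lemma compact_PT: "compact_space PT"
  unfolding PT_def
  by (subst compact_space_product_topology) (simp add: compact_space_discrete_topology)

lemma metrizable_PT: "metrizable_space PT"
  using cm_PT completely_metrizable_imp_metrizable_space by blast

lemma openin_cyl: "openin PT {w. \<forall>i<N. w i = w0 i}"
  unfolding PT_def openin_product_topology_alt
proof (intro ballI)
  fix x assume x: "x \<in> {w. \<forall>i<N. w i = w0 i}"
  let ?U = "\<lambda>i. if i < N then {w0 i} else UNIV"
  have "finite {i \<in> UNIV. ?U i \<noteq> topspace (discrete_topology UNIV)}"
    by (rule finite_subset[of _ "{..<N}"]) auto
  moreover have "x \<in> Pi\<^sub>E UNIV ?U" using x by auto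
  moreover have "Pi\<^sub>E UNIV ?U \<subseteq> {w. \<forall>i<N. w i = w0 i}" by (auto simp: PiE_iff) (metis singletonD)+
  ultimately show "\<exists>U. finite {i \<in> UNIV. U i \<noteq> topspace (discrete_topology UNIV)} \<and>
             (\<forall>i\<in>UNIV. openin (discrete_topology UNIV) (U i)) \<and>
             x \<in> Pi\<^sub>E UNIV U \<and> Pi\<^sub>E UNIV U \<subseteq> {w. \<forall>i<N. w i = w0 i}"
    by (intro exI[of _ ?U]) auto
qed

lemma open_contains_cyl:
  assumes "openin PT U" "w0 \<in> U"
  shows "\<exists>N. {w. \<forall>i<N. w i = w0 i} \<subseteq> U"
proof -
  obtain V where V: "finite {i \<in> UNIV. V i \<noteq> topspace (discrete_topology (UNIV::bool set))}"
     "w0 \<in> Pi\<^sub>E UNIV V" "Pi\<^sub>E UNIV V \<subseteq> U"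
    using assms unfolding PT_def openin_product_topology_alt by blast
  have fin: "finite {i. V i \<noteq> UNIV}" using V(1) by simp
  from finite_nat_bounded[OF fin] obtain N where "{i. V i \<noteq> UNIV} \<subseteq> {..<N}" by blast
  then have N: "\<And>i. V i \<noteq> UNIV \<Longrightarrow> i < N" by blast
  have "{w. \<forall>i<N. w i = w0 i} \<subseteq> Pi\<^sub>E UNIV V"
  proof
    fix w assume w: "w \<in> {w. \<forall>i<N. w i = w0 i}"
    have "w i \<in> V i" for i
    proof (cases "V i = UNIV")
      case False
      then have "i < N" using N by blast
      then show ?thesis using w V(2) by (auto simp: PiE_iff)
    qed simp
    then show "w \<in> Pi\<^sub>E UNIV V" by (simp add: PiE_iff)
  qed
  then have "{w. \<forall>i<N. w i = w0 i} \<subseteq> U" using V(3) by (rule order_trans)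
  then show ?thesis by (intro exI[of _ N])
qed

lemma continuous_flipc: "continuous_map PT PT (flipc n)"
  unfolding PT_def continuous_map_componentwise_UNIV
proof
  fix k
  show "continuous_map (product_topology (\<lambda>_. discrete_topology UNIV) UNIV) (discrete_topology UNIV)
          (\<lambda>x. flipc n x k)"
  proof (cases "k = n")
    case True
    have "continuous_map (product_topology (\<lambda>_. discrete_topology UNIV) UNIV) (discrete_topology UNIV)
          (Not \<circ> (\<lambda>x. x n))"
      by (rule continuous_map_compose[OF continuous_map_product_projection]) auto
    then show ?thesis using True by (simp add: flipc_apply o_def)
  next
    case False
    then show ?thesis using continuous_map_product_projection[of k UNIV "\<lambda>_. discrete_topology (UNIV::bool set)"]
      by (simp add: flipc_apply)
  qed
qed

lemma homeo_flipc: "homeomorphic_map PT PT (flipc n)"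
proof -
  have "homeomorphic_maps PT PT (flipc n) (flipc n)"
    unfolding homeomorphic_maps_def using continuous_flipc by simp
  then show ?thesis using homeomorphic_map_maps by blast
qed

lemma nowhere_dense_ones: "nowhere_dense_in PT {w. \<forall>i\<ge>j. w i}"
  unfolding nowhere_dense_in_def
proof (intro conjI)
  show "{w. \<forall>i\<ge>j. w i} \<subseteq> topspace PT" by simp
  show "PT interior_of (PT closure_of {w. \<forall>i\<ge>j. w i}) = {}"
  proof (rule ccontr)
    assume "PT interior_of (PT closure_of {w. \<forall>i\<ge>j. w i}) \<noteq> {}"
    then obtain w0 where w0: "w0 \<in> PT interior_of (PT closure_of {w. \<forall>i\<ge>j. w i})" by blast
    obtain N where N: "{w. \<forall>i<N. w i = w0 i} \<subseteq> PT interior_of (PT closure_of {w. \<forall>i\<ge>j. w i})"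
      using open_contains_cyl[OF openin_interior_of w0] by blast
    define m where "m = max N j"
    define w1 where "w1 = w0(m := False)"
    have "w1 \<in> {w. \<forall>i<N. w i = w0 i}" by (simp add: w1_def m_def)
    then have "w1 \<in> PT interior_of (PT closure_of {w. \<forall>i\<ge>j. w i})" using N by (meson subsetD)
    then have "w1 \<in> PT closure_of {w. \<forall>i\<ge>j. w i}" using interior_of_subset by (meson subsetD)
    moreover have "openin PT {w. \<not> w m}"
    proof -
      have "openin PT {x \<in> topspace PT. (\<lambda>x. x m) x \<in> {False}}"
        unfolding PT_def
        by (rule openin_continuous_map_preimage[OF continuous_map_product_projection]) auto
      then show ?thesis by simp
    qed
    moreover have "w1 \<in> {w. \<not> w m}" by (simp add: w1_def)
    ultimately have "\<exists>y. y \<in> {w. \<forall>i\<ge>j. w i} \<and> y \<in> {w. \<not> w m}"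
      by (simp add: in_closure_of) (metis mem_Collect_eq)
    then show False by (auto simp: m_def)
  qed
qed

lemma baire_core:
  assumes bp: "baire_property_in PT B"
    and fin: "\<forall>w\<in>B. finite {n. \<not> w n \<and> flipc n w \<in> B}"
  shows "meagre_in PT B"
proof -
  obtain U where U: "openin PT U" and M0: "meagre_in PT ((B - U) \<union> (U - B))"
    using bp unfolding baire_property_in_def by blast
  show ?thesis
  proof (cases "U = {}")
    case True
    then show ?thesis using M0 by simp
  next
    case False
    then obtain w0 where w0: "w0 \<in> U" by blast
    obtain N where N: "{w. \<forall>i<N. w i = w0 i} \<subseteq> U"
      using open_contains_cyl[OF U w0] by blast
    define M where "M = (B - U) \<union> (U - B)"
    define Bad where "Bad = M \<union> (\<Union>n. flipc n ` M) \<union> (\<Union>j. {w. \<forall>i\<ge>j. w i})"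
    have m1: "meagre_in PT (\<Union>n. flipc n ` M)"
      by (rule meagre_in_UN, rule meagre_homeo[OF homeo_flipc]) (use M0 M_def in simp)
    have m2: "meagre_in PT (\<Union>j. {w. \<forall>i\<ge>j. w i})"
      by (rule meagre_in_UN, rule nowhere_dense_imp_meagre, rule nowhere_dense_ones)
    have mM: "meagre_in PT M" using M0 M_def by simp
    have mB: "meagre_in PT Bad"
      unfolding Bad_def by (rule meagre_in_Un[OF meagre_in_Un[OF mM m1] m2])
    have "\<not> {w. \<forall>i<N. w i = w0 i} \<subseteq> Bad"
    proof
      assume "{w. \<forall>i<N. w i = w0 i} \<subseteq> Bad"
      then have "{w. \<forall>i<N. w i = w0 i} = {}"
        using meagre_open_empty[OF cm_PT mB openin_cyl] by blast
      then show False by blast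
    qed
    then obtain w where w: "\<forall>i<N. w i = w0 i" "w \<notin> Bad" by blast
    have wU: "w \<in> U" using w(1) N by blast
    have wB: "w \<in> B" using wU w(2) unfolding Bad_def M_def by blast
    have fB: "flipc n w \<in> B" if "n \<ge> N" for n
    proof -
      have "flipc n w \<in> U" using w(1) N that by (auto simp: flipc_apply)
      moreover have "flipc n w \<notin> M"
      proof
        assume "flipc n w \<in> M"
        then have "flipc n (flipc n w) \<in> flipc n ` M" by (rule imageI)
        then have "w \<in> Bad" unfolding Bad_def by auto
        then show False using w(2) by blast
      qed
      ultimately show ?thesis unfolding M_def by blast
    qed
    have inf0: "\<forall>j. \<exists>i\<ge>j. \<not> w i"
    proof
      fix j show "\<exists>i\<ge>j. \<not> w i"
      proof (rule ccontr)
        assume "\<not> (\<exists>i\<ge>j. \<not> w i)"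
        then have "w \<in> {w. \<forall>i\<ge>j. w i}" by auto
        then have "w \<in> Bad" unfolding Bad_def by blast
        then show False using w(2) by blast
      qed
    qed
    have "infinite {n. \<not> w n \<and> flipc n w \<in> B}"
      unfolding infinite_nat_iff_unbounded_le
    proof
      fix m
      obtain i where "i \<ge> max m N" "\<not> w i" using inf0 by blast
      then show "\<exists>n\<ge>m. n \<in> {n. \<not> w n \<and> flipc n w \<in> B}" using fB by auto
    qed
    then show ?thesis using fin wB by blast
  qed
qed


definition CM :: "bool measure" where "CM = measure_pmf (bernoulli_pmf (1/2))"

definition PM :: "(nat \<Rightarrow> bool) measure" where
  "PM = PiM UNIV (\<lambda>_. CM)"

lemma sets_CM[simp]: "sets CM = UNIV" by (simp add: CM_def)
lemma space_CM[simp]: "space CM = UNIV" by (simp add: CM_def)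

lemma space_PM[simp]: "space PM = UNIV"
  by (simp add: PM_def space_PiM)

lemma prob_PM: "prob_space PM"
  unfolding PM_def CM_def by (rule prob_space_PiM) (rule prob_space_measure_pmf)

interpretation PMi: prob_space PM by (rule prob_PM)

lemma coin_not: "emeasure CM (Not -` A) = emeasure CM A"
proof -
  have fin: "finite (Not -` A)" "finite A" by (rule finite)+
  have c: "card (Not -` A) = card A"
    by (rule card_vimage_inj) (auto simp: inj_def surj_def)
  show ?thesis unfolding CM_def
    by (simp add: emeasure_measure_pmf_finite[OF fin(1)] emeasure_measure_pmf_finite[OF fin(2)] c)
qed

lemma sets_PM_single: "{w. w i \<in> A} \<in> sets PM"
proof -
  have "{x \<in> space (Pi\<^sub>M UNIV (\<lambda>_. CM)). x i \<in> A} \<in> sets (Pi\<^sub>M UNIV (\<lambda>_. CM))"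
    by (rule sets_Collect_single) auto
  then show ?thesis by (simp add: PM_def[symmetric])
qed

lemma measurable_flipc: "flipc n \<in> measurable PM PM"
  unfolding PM_def
proof (rule measurable_PiM_single)
  show "flipc n \<in> space (Pi\<^sub>M UNIV (\<lambda>_. CM)) \<rightarrow> (\<Pi>\<^sub>E i\<in>UNIV. space CM)" by simp
  fix A i assume "i \<in> (UNIV::nat set)" "A \<in> sets CM"
  have "{w \<in> space (Pi\<^sub>M UNIV (\<lambda>_. CM)). flipc n w i \<in> A} = {w. w i \<in> (if i = n then Not -` A else A)}"
    by (auto simp: flipc_apply space_PiM)
  then show "{w \<in> space (Pi\<^sub>M UNIV (\<lambda>_. CM)). flipc n w i \<in> A} \<in> sets (Pi\<^sub>M UNIV (\<lambda>_. CM))"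
    using sets_PM_single unfolding PM_def by simp
qed

lemma distr_flipc: "distr PM PM (flipc n) = PM"
proof -
  have "PM = distr PM PM (flipc n)"
    unfolding PM_def
  proof (rule measure_eqI_PiM_infinite)
    show "sets (Pi\<^sub>M (UNIV::nat set) (\<lambda>_. CM)) = sets (Pi\<^sub>M (UNIV::nat set) (\<lambda>_. CM))" by simp
    show "sets (distr (Pi\<^sub>M (UNIV::nat set) (\<lambda>_. CM)) (Pi\<^sub>M (UNIV::nat set) (\<lambda>_. CM)) (flipc n)) = sets (Pi\<^sub>M (UNIV::nat set) (\<lambda>_. CM))" by simp
    show "finite_measure (Pi\<^sub>M (UNIV::nat set) (\<lambda>_. CM))"
      by (rule PMi.finite_measure_axioms[unfolded PM_def])
    fix A J assume J: "finite J" "J \<subseteq> (UNIV::nat set)" and A: "\<And>i. i \<in> J \<Longrightarrow> A i \<in> sets CM"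
    define A' where "A' j = (if j = n then Not -` A j else A j)" for j
    have pre: "flipc n -` prod_emb (UNIV::nat set) (\<lambda>_. CM) J (Pi\<^sub>E J A) \<inter> space (Pi\<^sub>M (UNIV::nat set) (\<lambda>_. CM))
        = prod_emb (UNIV::nat set) (\<lambda>_. CM) J (Pi\<^sub>E J A')"
      by (auto simp: prod_emb_def space_PiM PiE_iff A'_def flipc_apply split: if_splits)
    have "emeasure (distr (Pi\<^sub>M (UNIV::nat set) (\<lambda>_. CM)) (Pi\<^sub>M (UNIV::nat set) (\<lambda>_. CM)) (flipc n)) (prod_emb (UNIV::nat set) (\<lambda>_. CM) J (Pi\<^sub>E J A))
        = emeasure (Pi\<^sub>M (UNIV::nat set) (\<lambda>_. CM)) (prod_emb (UNIV::nat set) (\<lambda>_. CM) J (Pi\<^sub>E J A'))"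
      using measurable_flipc J
      by (subst emeasure_distr) (auto simp: PM_def pre intro!: sets_PiM_I)
    also have "\<dots> = (\<Prod>i\<in>J. emeasure CM (A' i))"
      by (rule emeasure_PiM_emb) (auto simp: J CM_def intro: prob_space_measure_pmf)
    also have "\<dots> = (\<Prod>i\<in>J. emeasure CM (A i))"
      by (rule prod.cong) (auto simp: A'_def coin_not)
    also have "\<dots> = emeasure (Pi\<^sub>M (UNIV::nat set) (\<lambda>_. CM)) (prod_emb (UNIV::nat set) (\<lambda>_. CM) J (Pi\<^sub>E J A))"
      by (rule emeasure_PiM_emb[symmetric]) (auto simp: J CM_def intro: prob_space_measure_pmf)
    finally show "emeasure (Pi\<^sub>M (UNIV::nat set) (\<lambda>_. CM)) (prod_emb (UNIV::nat set) (\<lambda>_. CM) J (Pi\<^sub>E J A)) =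
         emeasure (distr (Pi\<^sub>M (UNIV::nat set) (\<lambda>_. CM)) (Pi\<^sub>M (UNIV::nat set) (\<lambda>_. CM)) (flipc n)) (prod_emb (UNIV::nat set) (\<lambda>_. CM) J (Pi\<^sub>E J A))"
      by simp
  qed
  then show ?thesis by simp
qed

lemma measure_flipc: "S \<in> sets PM \<Longrightarrow> measure PM (flipc n -` S) = measure PM S"
proof -
  assume S: "S \<in> sets PM"
  have "measure (distr PM PM (flipc n)) S = measure PM (flipc n -` S \<inter> space PM)"
    by (rule measure_distr[OF measurable_flipc S])
  then show ?thesis by (simp add: distr_flipc)
qed

lemma flipc_sets: "S \<in> sets PM \<Longrightarrow> flipc n -` S \<in> sets PM"
  using measurable_flipc[of n] unfolding measurable_def by auto


definition cyl :: "nat \<Rightarrow> (nat \<Rightarrow> bool) set \<Rightarrow> bool" where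
  "cyl N C \<longleftrightarrow> (\<forall>w w'. (\<forall>i<N. w i = w' i) \<longrightarrow> (w \<in> C \<longleftrightarrow> w' \<in> C))"

definition approxd :: "(nat \<Rightarrow> bool) set \<Rightarrow> bool" where
  "approxd E \<longleftrightarrow> (\<forall>d>0. \<exists>C N. C \<in> sets PM \<and> cyl N C \<and> measure PM ((E - C) \<union> (C - E)) < d)"

lemma measure_Un_le: "A \<in> sets PM \<Longrightarrow> B \<in> sets PM \<Longrightarrow> measure PM (A \<union> B) \<le> measure PM A + measure PM B"
  by (rule measure_subadditive) (auto simp: PMi.emeasure_finite)

lemma sets_PM_eq: "sets PM = sigma_sets (\<Pi>\<^sub>E i\<in>(UNIV::nat set). space CM) (prod_algebra UNIV (\<lambda>_. CM))"
  unfolding PM_def by (rule sets_PiM)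

lemma approx_all:
  assumes E: "E \<in> sets PM"
  shows "approxd E"
proof -
  have E': "E \<in> sigma_sets (\<Pi>\<^sub>E i\<in>(UNIV::nat set). space CM) (prod_algebra UNIV (\<lambda>_. CM))"
    using E sets_PM_eq by simp
  have Om: "(\<Pi>\<^sub>E i\<in>(UNIV::nat set). space CM) = UNIV" by simp
  show ?thesis
    using E'
  proof (induct rule: sigma_sets_induct_disjoint[OF Int_stable_prod_algebra prod_algebra_sets_into_space, consumes 1, case_names basic empty compl union])
    case (basic A)
    then obtain J X where A: "A = prod_emb UNIV (\<lambda>_. CM) J (\<Pi>\<^sub>E j\<in>J. X j)" "finite J"
      by (auto elim!: prod_algebraE)
    from finite_nat_bounded[OF A(2)] obtain N where N: "J \<subseteq> {..<N}" by blast
    have AS: "A \<in> sets PM" using basic sets_PM_eq by (simp add: sigma_sets.Basic)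
    have "cyl N A"
      unfolding cyl_def
    proof (intro allI impI)
      fix w w' :: "nat \<Rightarrow> bool" assume h: "\<forall>i<N. w i = w' i"
      then have "\<forall>j\<in>J. w j = w' j" using N by auto
      then show "w \<in> A \<longleftrightarrow> w' \<in> A"
        unfolding A(1) by (auto simp: prod_emb_def PiE_iff)
    qed
    then show ?case unfolding approxd_def using AS by (intro allI impI exI[of _ A] exI[of _ N]) auto
  next
    case empty
    show ?case unfolding approxd_def by (intro allI impI exI[of _ "{}"] exI[of _ 0]) (auto simp: cyl_def)
  next
    case (compl A)
    show ?case unfolding approxd_def
    proof (intro allI impI)
      fix d :: real assume d: "d > 0"
      obtain C N where C: "C \<in> sets PM" "cyl N C" "measure PM ((A - C) \<union> (C - A)) < d"
        using compl(2) d unfolding approxd_def by blast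
      have "((UNIV - A) - (UNIV - C)) \<union> ((UNIV - C) - (UNIV - A)) = (A - C) \<union> (C - A)" by blast
      moreover have "UNIV - C \<in> sets PM" using sets.compl_sets[OF C(1)] by simp
      moreover have "cyl N (UNIV - C)" using C(2) unfolding cyl_def by blast
      ultimately show "\<exists>C' N. C' \<in> sets PM \<and> cyl N C' \<and>
          measure PM (((\<Pi>\<^sub>E i\<in>UNIV. space CM) - A - C') \<union> (C' - ((\<Pi>\<^sub>E i\<in>UNIV. space CM) - A))) < d"
        using C(3) unfolding Om by (intro exI[of _ "UNIV - C"] exI[of _ N]) simp
    qed
  next
    case (union A)
    have AS: "\<And>i. A i \<in> sets PM" using union(2) sets_PM_eq by auto
    show ?case unfolding approxd_def
    proof (intro allI impI)
      fix d :: real assume d: "d > 0"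
      define U where "U = (\<Union>i. A i)"
      define B where "B K = (\<Union>i\<in>{..<K}. A i)" for K
      have BS: "B K \<in> sets PM" for K unfolding B_def using AS by auto
      have US: "U \<in> sets PM" unfolding U_def using AS by auto
      have "incseq B" unfolding B_def incseq_def by (auto intro: less_le_trans)
      moreover have "(\<Union>K. B K) = U" unfolding B_def U_def by auto
      ultimately have lim: "(\<lambda>K. measure PM (B K)) \<longlonglongrightarrow> measure PM U"
        using PMi.finite_Lim_measure_incseq[of B] BS by auto
      then obtain K where K: "\<bar>measure PM (B K) - measure PM U\<bar> < d/2"
        using d unfolding LIMSEQ_iff by (metis half_gt_zero le_refl real_norm_def)
      have BU: "B K \<subseteq> U" unfolding B_def U_def by auto
      have m1: "measure PM (U - B K) < d/2"
        using K PMi.finite_measure_Diff[OF US BS BU] by linarith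
      define e where "e = d / (2 * (real K + 1))"
      have e: "e > 0" using d unfolding e_def by simp
      have "\<forall>i. \<exists>C. \<exists>N. C \<in> sets PM \<and> cyl N C \<and> measure PM ((A i - C) \<union> (C - A i)) < e"
        using union(3) e unfolding approxd_def by blast
      from choice[OF this] obtain Cf where "\<forall>i. \<exists>N. Cf i \<in> sets PM \<and> cyl N (Cf i) \<and> measure PM ((A i - Cf i) \<union> (Cf i - A i)) < e"
        by blast
      from choice[OF this] obtain Nf where Cf: "\<And>i. Cf i \<in> sets PM" "\<And>i. cyl (Nf i) (Cf i)"
          "\<And>i. measure PM ((A i - Cf i) \<union> (Cf i - A i)) < e"
        by blast
      define C where "C = (\<Union>i\<in>{..<K}. Cf i)"
      define N where "N = (\<Sum>i<K. Nf i)"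
      have CS: "C \<in> sets PM" unfolding C_def using Cf(1) by auto
      have "cyl N C"
        unfolding cyl_def
      proof (intro allI impI)
        fix w w' :: "nat \<Rightarrow> bool" assume h: "\<forall>i<N. w i = w' i"
        have "w \<in> Cf i \<longleftrightarrow> w' \<in> Cf i" if "i < K" for i
        proof -
          have "Nf i \<le> N" unfolding N_def using that by (intro member_le_sum) auto
          then have "\<forall>j<Nf i. w j = w' j" using h by auto
          then show ?thesis using Cf(2)[of i] unfolding cyl_def by blast
        qed
        then show "w \<in> C \<longleftrightarrow> w' \<in> C" unfolding C_def by blast
      qed
      moreover have "measure PM ((U - C) \<union> (C - U)) < d"
      proof -
        define D where "D i = (A i - Cf i) \<union> (Cf i - A i)" for i
        have DS: "D i \<in> sets PM" for i unfolding D_def using AS Cf(1) by auto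
        have sub: "(U - C) \<union> (C - U) \<subseteq> (U - B K) \<union> (\<Union>i\<in>{..<K}. D i)"
          unfolding U_def C_def B_def D_def by blast
        have "measure PM ((U - C) \<union> (C - U)) \<le> measure PM ((U - B K) \<union> (\<Union>i\<in>{..<K}. D i))"
          by (rule PMi.finite_measure_mono[OF sub]) (use US BS DS in auto)
        also have "\<dots> \<le> measure PM (U - B K) + measure PM (\<Union>i\<in>{..<K}. D i)"
          by (rule measure_Un_le) (use US BS DS in auto)
        also have "measure PM (\<Union>i\<in>{..<K}. D i) \<le> (\<Sum>i<K. measure PM (D i))"
          by (rule PMi.finite_measure_subadditive_finite) (use DS in auto)
        also have "(\<Sum>i<K. measure PM (D i)) \<le> (\<Sum>i<K. e)"
          by (rule sum_mono) (use Cf(3) D_def in \<open>auto intro: less_imp_le\<close>)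
        also have "(\<Sum>i<K. e) = real K * e" by simp
        also have "real K * e < d / 2"
        proof -
          have "real K * e = d / 2 * (real K / (real K + 1))" unfolding e_def by (simp add: field_simps)
          also have "\<dots> < d / 2 * 1" using d by (intro mult_strict_left_mono) auto
          finally show ?thesis by simp
        qed
        finally show ?thesis using m1 by linarith
      qed
      ultimately show "\<exists>C N. C \<in> sets PM \<and> cyl N C \<and> measure PM ((\<Union>i. A i) - C \<union> (C - (\<Union>i. A i))) < d"
        using CS unfolding U_def by blast
    qed
  qed
qed

lemma measure_core:
  assumes E: "E \<in> sets PM"
    and fin: "\<forall>w\<in>E. finite {n. \<not> w n \<and> flipc n w \<in> E}"
  shows "measure PM E = 0"
proof (rule ccontr)
  assume "measure PM E \<noteq> 0"
  then have p: "measure PM E > 0" using measure_nonneg[of PM E] by linarith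
  define p where "p = measure PM E"
  obtain C N where C: "C \<in> sets PM" "cyl N C" "measure PM ((E - C) \<union> (C - E)) < p/2"
    using approx_all[OF E] p unfolding approxd_def p_def by (metis half_gt_zero)
  have fC: "flipc n -` C = C" if "n \<ge> N" for n
  proof -
    have "\<And>w. flipc n w \<in> C \<longleftrightarrow> w \<in> C"
      using C(2) that unfolding cyl_def by (metis flipc_apply not_le)
    then show ?thesis by auto
  qed
  define D where "D n = E \<inter> flipc n -` E" for n
  define G where "G n = D n \<inter> {w. \<not> w n}" for n
  have DS: "D n \<in> sets PM" for n unfolding D_def using E flipc_sets by auto
  have GS: "G n \<in> sets PM" for n
  proof -
    have "{w. \<not> w n} = {w. w n \<in> {False}}" by auto
    then have "{w. \<not> w n} \<in> sets PM" using sets_PM_single[of n "{False}"] by simp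
    then show ?thesis unfolding G_def using DS by auto
  qed
  have ECS: "E - C \<in> sets PM" "C - E \<in> sets PM" using E C(1) by auto
  have Dm: "measure PM (D n) > p/2" if "n \<ge> N" for n
  proof -
    have sub: "E - D n \<subseteq> (E - C) \<union> flipc n -` (C - E)"
      using fC[OF that] unfolding D_def by blast
    have "measure PM (E - D n) \<le> measure PM ((E - C) \<union> flipc n -` (C - E))"
      by (rule PMi.finite_measure_mono[OF sub]) (use ECS flipc_sets in auto)
    also have "\<dots> \<le> measure PM (E - C) + measure PM (flipc n -` (C - E))"
      by (rule measure_Un_le) (use ECS flipc_sets in auto)
    also have "measure PM (flipc n -` (C - E)) = measure PM (C - E)"
      by (rule measure_flipc[OF ECS(2)])
    also have "measure PM (E - C) + measure PM (C - E) = measure PM ((E - C) \<union> (C - E))"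
      by (rule PMi.finite_measure_Union[symmetric]) (use ECS in auto)
    finally have "measure PM (E - D n) < p / 2" using C(3) by linarith
    moreover have "measure PM (E - D n) = measure PM E - measure PM (D n)"
      by (rule PMi.finite_measure_Diff[OF E DS]) (auto simp: D_def)
    ultimately show ?thesis unfolding p_def by linarith
  qed
  have Gm: "measure PM (G n) > p/4" if "n \<ge> N" for n
  proof -
    have fG: "flipc n -` G n = D n \<inter> {w. w n}"
      unfolding G_def D_def by (auto simp: flipc_apply)
    have "D n = G n \<union> (D n \<inter> {w. w n})" unfolding G_def by auto
    then have "measure PM (D n) = measure PM (G n) + measure PM (D n \<inter> {w. w n})"
      using PMi.finite_measure_Union[of "G n" "D n \<inter> {w. w n}"] GS fG flipc_sets
      unfolding G_def by (metis (no_types, lifting) Int_Collect disjoint_iff)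
    also have "measure PM (D n \<inter> {w. w n}) = measure PM (G n)"
      using measure_flipc[OF GS[of n], of n] fG by simp
    finally show ?thesis using Dm[OF that] by linarith
  qed
  define L where "L j = (\<Union>m. G (m + j + N))" for j
  have LS: "L j \<in> sets PM" for j unfolding L_def using GS by auto
  have "decseq L"
    unfolding decseq_Suc_iff L_def
  proof (intro allI subsetI)
    fix j w assume "w \<in> (\<Union>m. G (m + Suc j + N))"
    then obtain m where "w \<in> G (Suc m + j + N)" by auto
    then show "w \<in> (\<Union>m. G (m + j + N))" by blast
  qed
  then have lim: "(\<lambda>j. measure PM (L j)) \<longlonglongrightarrow> measure PM (\<Inter>j. L j)"
    using PMi.finite_Lim_measure_decseq[of L] LS by auto
  have "p/4 \<le> measure PM (L j)" for j
  proof -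
    have "G (0 + j + N) \<subseteq> L j" unfolding L_def by blast
    then have "measure PM (G (0 + j + N)) \<le> measure PM (L j)"
      by (rule PMi.finite_measure_mono) (rule LS)
    moreover have "measure PM (G (0 + j + N)) > p/4" by (rule Gm) simp
    ultimately show ?thesis by linarith
  qed
  then have "p/4 \<le> measure PM (\<Inter>j. L j)"
    by (intro LIMSEQ_le_const[OF lim]) auto
  then have "(\<Inter>j. L j) \<noteq> {}" using p unfolding p_def by auto
  then obtain w where w: "\<And>j. w \<in> L j" by blast
  have wE: "w \<in> E" using w[of 0] unfolding L_def G_def D_def by blast
  have "infinite {n. \<not> w n \<and> flipc n w \<in> E}"
    unfolding infinite_nat_iff_unbounded_le
  proof
    fix j
    obtain m where "w \<in> G (m + j + N)" using w[of j] unfolding L_def by blast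
    then show "\<exists>n\<ge>j. n \<in> {n. \<not> w n \<and> flipc n w \<in> E}"
      unfolding G_def D_def by (intro exI[of _ "m + j + N"]) auto
  qed
  then show False using fin wE by blast
qed


definition psum :: "(nat \<Rightarrow> 'a::ab_group_add) \<Rightarrow> nat \<Rightarrow> (nat \<Rightarrow> bool) \<Rightarrow> 'a" where
  "psum x N w = (\<Sum>n<N. if w n then x n else 0)"

definition gmap :: "(nat \<Rightarrow> 'a::{ab_group_add,metric_space}) \<Rightarrow> (nat \<Rightarrow> bool) \<Rightarrow> 'a" where
  "gmap x w = lim (\<lambda>N. psum x N w)"

lemma psum_Suc: "psum x (Suc N) w = psum x N w + (if w N then x N else 0)"
  by (simp add: psum_def)

lemma psum_cong: "(\<forall>i<N. w i = w' i) \<Longrightarrow> psum x N w = psum x N w'"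
  unfolding psum_def by (rule sum.cong) auto

context
  fixes x :: "nat \<Rightarrow> 'a::{ab_group_add, metric_space, complete_space}"
  assumes inv: "\<forall>a b c::'a. dist (a + c) (b + c) = dist a b"
    and hx: "\<forall>n. dist (x n) 0 \<le> (1/2)^n"
begin

lemma dist_add_right: "dist (a + c) (b + c) = dist a (b::'a)"
  using inv by blast

lemma dist_add_left: "dist (c + a) (c + b) = dist a (b::'a)"
  using inv by (simp add: add.commute)

lemma dist_psum_step: "dist (psum x (Suc M) w) (psum x M w) \<le> (1/2)^M"
proof -
  have "dist (psum x (Suc M) w) (psum x M w) = dist (psum x M w + (if w M then x M else 0)) (psum x M w + 0)"
    by (simp add: psum_Suc)
  also have "\<dots> = dist (if w M then x M else 0) 0" by (rule dist_add_left)
  also have "\<dots> \<le> (1/2)^M" using hx by auto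
  finally show ?thesis .
qed

lemma dist_psum_le: "N \<le> M \<Longrightarrow> dist (psum x M w) (psum x N w) \<le> 2 * (1/2)^N - 2 * (1/2)^M"
proof (induction M rule: dec_induct)
  case base
  then show ?case by simp
next
  case (step M)
  have "dist (psum x (Suc M) w) (psum x N w) \<le> dist (psum x (Suc M) w) (psum x M w) + dist (psum x M w) (psum x N w)"
    by (rule dist_triangle)
  also have "\<dots> \<le> (1/2)^M + (2 * (1/2)^N - 2 * (1/2)^M)"
    using dist_psum_step[of M w] step.IH by linarith
  also have "\<dots> = 2 * (1/2)^N - 2 * (1/2)^Suc M" by simp
  finally show ?case .
qed

lemma dist_psum_le': "N \<le> M \<Longrightarrow> dist (psum x M w) (psum x N w) \<le> 2 * (1/2)^N"
proof -
  assume "N \<le> M"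
  then have "dist (psum x M w) (psum x N w) \<le> 2 * (1/2)^N - 2 * (1/2)^M" by (rule dist_psum_le)
  moreover have "(0::real) \<le> (1/2)^M" by simp
  ultimately show ?thesis by linarith
qed

lemma psum_Cauchy: "Cauchy (\<lambda>N. psum x N w)"
proof (rule metric_CauchyI)
  fix e :: real assume e: "e > 0"
  obtain K where K: "(1/2::real)^K < e/2" using real_arch_pow_inv[of "e/2" "1/2"] e by auto
  show "\<exists>M. \<forall>m\<ge>M. \<forall>n\<ge>M. dist (psum x m w) (psum x n w) < e"
  proof (intro exI allI impI)
    fix m n assume mn: "K \<le> m" "K \<le> n"
    have pKn: "(1/2::real)^n \<le> (1/2)^K" using mn by (intro power_decreasing) auto
    have pKm: "(1/2::real)^m \<le> (1/2)^K" using mn by (intro power_decreasing) auto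
    show "dist (psum x m w) (psum x n w) < e"
    proof (cases "n \<le> m")
      case True
      then have "dist (psum x m w) (psum x n w) \<le> 2 * (1/2)^n" by (rule dist_psum_le')
      then show ?thesis using pKn K by linarith
    next
      case False
      then have "dist (psum x n w) (psum x m w) \<le> 2 * (1/2)^m" by (intro dist_psum_le') auto
      then have "dist (psum x m w) (psum x n w) \<le> 2 * (1/2)^m" by (simp add: dist_commute)
      then show ?thesis using pKm K by linarith
    qed
  qed
qed

lemma psum_lim: "(\<lambda>N. psum x N w) \<longlonglongrightarrow> gmap x w"
  unfolding gmap_def using psum_Cauchy Cauchy_convergent convergent_LIMSEQ_iff by blast

lemma dist_gmap_psum: "dist (gmap x w) (psum x N w) \<le> 2 * (1/2)^N"
proof -
  have "(\<lambda>M. dist (psum x M w) (psum x N w)) \<longlonglongrightarrow> dist (gmap x w) (psum x N w)"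
    by (intro tendsto_dist psum_lim tendsto_const)
  then show ?thesis
    by (rule Lim_bounded[where M = N]) (auto intro: dist_psum_le')
qed

lemma small_pow: "0 < e \<Longrightarrow> \<exists>N. N \<ge> m \<and> 4 * (1/2::real)^N < e"
proof -
  assume e: "0 < e"
  obtain K where K: "(1/2::real)^K < e/4" using real_arch_pow_inv[of "e/4" "1/2"] e by auto
  have "(1/2::real)^(K + m) \<le> (1/2)^K" by (intro power_decreasing) auto
  then have "4 * (1/2::real)^(K + m) < e" using K by linarith
  then show ?thesis by (intro exI[of _ "K + m"]) auto
qed

lemma continuous_gmap: "continuous_map PT euclidean (gmap x)"
  unfolding continuous_map_def
proof (intro conjI allI impI)
  show "gmap x \<in> topspace PT \<rightarrow> topspace euclidean" by simp
  fix U :: "'a set" assume "openin euclidean U"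
  then have U: "open U" by simp
  show "openin PT {w \<in> topspace PT. gmap x w \<in> U}"
  proof (subst openin_subopen, intro ballI)
    fix w assume w: "w \<in> {w \<in> topspace PT. gmap x w \<in> U}"
    then obtain e where e: "e > 0" "ball (gmap x w) e \<subseteq> U" using U open_contains_ball by blast
    obtain N where N: "4 * (1/2::real)^N < e" using small_pow[OF e(1), of 0] by blast
    let ?T = "{w'. \<forall>i<N. w' i = w i}"
    have "?T \<subseteq> {w \<in> topspace PT. gmap x w \<in> U}"
    proof
      fix w' assume w': "w' \<in> ?T"
      then have eq: "psum x N w' = psum x N w" by (intro psum_cong) auto
      have "dist (gmap x w') (gmap x w) \<le> dist (gmap x w') (psum x N w') + dist (psum x N w) (gmap x w)"
        using dist_triangle[of "gmap x w'" "gmap x w" "psum x N w'"] eq by simp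
      also have "\<dots> \<le> 2 * (1/2)^N + 2 * (1/2)^N"
        using dist_gmap_psum[of w' N] dist_gmap_psum[of w N] by (simp add: dist_commute)
      finally have "dist (gmap x w') (gmap x w) < e" using N by linarith
      then show "w' \<in> {w \<in> topspace PT. gmap x w \<in> U}" using e(2) by (auto simp: dist_commute)
    qed
    then show "\<exists>T. openin PT T \<and> w \<in> T \<and> T \<subseteq> {w \<in> topspace PT. gmap x w \<in> U}"
      by (intro exI[of _ ?T]) (auto simp: openin_cyl)
  qed
qed

lemma continuous_translate: "continuous_on UNIV (\<lambda>v::'a. v + c)"
  unfolding continuous_on_iff by (metis dist_add_right)

lemma measurable_psum: "psum x N \<in> borel_measurable PM"
proof (induction N)
  case 0
  then show ?case by (simp add: psum_def)
next
  case (Suc N)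
  have eq: "psum x (Suc N) = (\<lambda>w. if w N then psum x N w + x N else psum x N w)"
    by (auto simp: psum_Suc)
  have m1: "(\<lambda>w. psum x N w + x N) \<in> borel_measurable PM"
    using measurable_compose[OF Suc.IH borel_measurable_continuous_onI[OF continuous_translate[of "x N"]]]
    by (simp add: o_def)
  have "{w \<in> space PM. w N} \<in> sets PM"
    using sets_PM_single[of N "{True}"] by (simp add: Collect_conv_if)
  then show ?case unfolding eq by (rule measurable_If[OF m1 Suc.IH])
qed

lemma measurable_gmap: "gmap x \<in> borel_measurable PM"
  by (rule borel_measurable_LIMSEQ_metric[OF measurable_psum psum_lim])

lemma psum_flipc:
  assumes "\<not> w n" "n < N"
  shows "psum x N (flipc n w) = psum x N w + x n"
proof -
  have "Suc n \<le> N" using assms(2) by simp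
  then show ?thesis
proof (induction N rule: dec_induct)
  case base
  have "psum x n (flipc n w) = psum x n w" by (rule psum_cong) (auto simp: flipc_apply)
  moreover have "flipc n w n" using assms(1) by (simp add: flipc_apply)
  ultimately show ?case using assms(1) by (simp only: psum_Suc) simp
next
  case (step M)
  have "M \<noteq> n" using step.hyps by auto
  then have "flipc n w M = w M" by (simp add: flipc_apply)
  then show ?case using step.IH by (simp only: psum_Suc) (simp add: add_ac)
qed
qed

lemma gmap_flipc:
  assumes "\<not> w n"
  shows "gmap x (flipc n w) = gmap x w + x n"
proof (rule ccontr)
  assume ne: "gmap x (flipc n w) \<noteq> gmap x w + x n"
  define d where "d = dist (gmap x (flipc n w)) (gmap x w + x n)"
  have d: "d > 0" using ne unfolding d_def by simp
  obtain N where N: "N \<ge> Suc n" "4 * (1/2::real)^N < d" using small_pow[OF d] by blast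
  have eq: "psum x N (flipc n w) = psum x N w + x n" using psum_flipc[of w n N] assms N by simp
  have "d \<le> dist (gmap x (flipc n w)) (psum x N (flipc n w)) + dist (psum x N (flipc n w)) (gmap x w + x n)"
    unfolding d_def by (rule dist_triangle)
  also have "dist (psum x N (flipc n w)) (gmap x w + x n) = dist (psum x N w) (gmap x w)"
    unfolding eq by (rule dist_add_right)
  also have "dist (gmap x (flipc n w)) (psum x N (flipc n w)) + dist (psum x N w) (gmap x w) \<le> 2 * (1/2)^N + 2 * (1/2)^N"
    using dist_gmap_psum[of "flipc n w" N] dist_gmap_psum[of w N] by (simp add: dist_commute)
  finally show False using N by linarith
qed

end


lemma mem_translate: "v \<in> translate A z \<longleftrightarrow> v - z \<in> (A::'a::ab_group_add set)"
proof
  assume "v \<in> translate A z"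
  then obtain a where "a \<in> A" "v = a + z" unfolding translate_def by blast
  then show "v - z \<in> A" by simp
next
  assume "v - z \<in> A"
  moreover have "v = (v - z) + z" by simp
  ultimately show "v \<in> translate A z" unfolding translate_def by blast
qed

lemma kfold_bound:
  fixes f :: "'a::ab_group_add \<Rightarrow> real"
  assumes sub: "subadditive f" and M: "\<forall>t\<in>T. f t \<le> M"
  shows "\<forall>t. (\<forall>i<k. t i \<in> T) \<longrightarrow> f (\<Sum>i<k. t i) \<le> \<bar>f 0\<bar> + real k * \<bar>M\<bar>"
proof (induction k)
  case 0
  then show ?case by simp
next
  case (Suc k)
  show ?case
  proof (intro allI impI)
    fix t assume t: "\<forall>i<Suc k. t i \<in> T"
    have "f (\<Sum>i<Suc k. t i) = f ((\<Sum>i<k. t i) + t k)" by simp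
    also have "\<dots> \<le> f (\<Sum>i<k. t i) + f (t k)" using sub unfolding subadditive_def by blast
    also have "\<dots> \<le> (\<bar>f 0\<bar> + real k * \<bar>M\<bar>) + \<bar>M\<bar>"
      using Suc.IH t M by (smt (verit, best) less_Suc_eq)
    finally show "f (\<Sum>i<Suc k. t i) \<le> \<bar>f 0\<bar> + real (Suc k) * \<bar>M\<bar>" by (simp add: algebra_simps)
  qed
qed

lemma lb_from_ball:
  fixes f :: "'a::{ab_group_add, metric_space} \<Rightarrow> real"
  assumes inv: "\<forall>a b c::'a. dist (a + c) (b + c) = dist a b"
    and sub: "subadditive f" and r: "r > 0" and C: "\<forall>v. dist v 0 < r \<longrightarrow> f v \<le> C"
  shows "locally_bounded_at f p"
  unfolding locally_bounded_at_def
proof (intro exI conjI ballI)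
  show "open (ball p r)" by simp
  show "p \<in> ball p r" using r by simp
  fix y assume y: "y \<in> ball p r"
  have "dist (y - p + p) (0 + p) = dist (y - p) 0" using inv by blast
  then have d1: "dist (y - p) 0 = dist y p" by simp
  have "dist (p - y + y) (0 + y) = dist (p - y) 0" using inv by blast
  then have d2: "dist (p - y) 0 = dist p y" by simp
  have "f (y - p) \<le> C" using C d1 y by (simp add: dist_commute)
  moreover have "f (p - y) \<le> C" using C d2 y by simp
  moreover have "f y \<le> f p + f (y - p)"
    using sub unfolding subadditive_def by (metis add.commute diff_add_cancel)
  moreover have "f p \<le> f y + f (p - y)"
    using sub unfolding subadditive_def by (metis add.commute diff_add_cancel)
  ultimately show "\<bar>f y\<bar> \<le> \<bar>f p\<bar> + \<bar>C\<bar>" by linarith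
qed

lemma finite_real_less: "finite {n::nat. real n < c}"
proof -
  have "{n::nat. real n < c} \<subseteq> {..<nat \<lceil>c\<rceil>}"
  proof
    fix n assume "n \<in> {n::nat. real n < c}"
    then have "real n < c" by simp
    then have "int n < \<lceil>c\<rceil>" by (simp add: less_ceiling_iff)
    then show "n \<in> {..<nat \<lceil>c\<rceil>}" by simp
  qed
  then show ?thesis using finite_subset by blast
qed

lemma phi_lemma:
  fixes x :: "nat \<Rightarrow> 'a::{ab_group_add, metric_space, complete_space}"
  assumes inv: "\<forall>a b c::'a. dist (a + c) (b + c) = dist a b"
    and hx: "\<forall>n. dist (x n) 0 \<le> (1/2)^n"
    and nf: "\<forall>y. finite {n. y + x n \<in> A}"
    and SA: "S \<subseteq> A"
  shows "\<forall>w\<in>{w. gmap x w - z \<in> S}. finite {n. \<not> w n \<and> flipc n w \<in> {w. gmap x w - z \<in> S}}"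
proof
  fix w assume "w \<in> {w. gmap x w - z \<in> S}"
  have "{n. \<not> w n \<and> flipc n w \<in> {w. gmap x w - z \<in> S}} \<subseteq> {n. (gmap x w - z) + x n \<in> A}"
  proof
    fix n assume n: "n \<in> {n. \<not> w n \<and> flipc n w \<in> {w. gmap x w - z \<in> S}}"
    then have "gmap x (flipc n w) = gmap x w + x n" using gmap_flipc[OF inv hx] by blast
    moreover have "gmap x (flipc n w) - z \<in> A" using n SA by blast
    ultimately show "n \<in> {n. (gmap x w - z) + x n \<in> A}" by (simp add: algebra_simps)
  qed
  then show "finite {n. \<not> w n \<and> flipc n w \<in> {w. gmap x w - z \<in> S}}"
    using nf finite_subset by blast
qed

lemma baire_branch:
  fixes x :: "nat \<Rightarrow> 'a::{ab_group_add, metric_space, complete_space}"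
  assumes inv: "\<forall>a b c::'a. dist (a + c) (b + c) = dist a b"
    and hx: "\<forall>n. dist (x n) 0 \<le> (1/2)^n"
    and nf: "\<forall>y. finite {n. y + x n \<in> A}"
    and UB: "universally_Baire A"
  shows "Haar_meagre A"
proof -
  obtain \<phi> :: "nat set \<Rightarrow> real" where \<phi>: "inj_on \<phi> UNIV"
    using nat_sets_lepoll_reals01 unfolding lepoll_def by blast
  define \<iota> where "\<iota> w = \<phi> {n. w n}" for w :: "nat \<Rightarrow> bool"
  have inj\<iota>: "inj \<iota>"
  proof (rule injI)
    fix w w' assume "\<iota> w = \<iota> w'"
    then have "{n. w n} = {n. w' n}" using \<phi> unfolding \<iota>_def inj_on_def by blast
    then have "\<And>n. w n = w' n" by (metis mem_Collect_eq)
    then show "w = w'" by (rule ext)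
  qed
  define \<rho> where "\<rho> = inv \<iota>"
  have \<rho>\<iota>[simp]: "\<rho> (\<iota> w) = w" for w unfolding \<rho>_def using inj\<iota> by simp
  define Kt where "Kt = topology (\<lambda>S. S \<subseteq> range \<iota> \<and> openin PT (\<iota> -` S))"
  have i1: "S \<inter> T \<subseteq> range \<iota> \<and> openin PT (\<iota> -` (S \<inter> T))"
    if "S \<subseteq> range \<iota> \<and> openin PT (\<iota> -` S)" "T \<subseteq> range \<iota> \<and> openin PT (\<iota> -` T)" for S T
  proof -
    have "\<iota> -` (S \<inter> T) = \<iota> -` S \<inter> \<iota> -` T" by auto
    then show ?thesis using that openin_Int by auto
  qed
  have i2: "\<Union>K \<subseteq> range \<iota> \<and> openin PT (\<iota> -` \<Union>K)"
    if K: "\<forall>S\<in>K. S \<subseteq> range \<iota> \<and> openin PT (\<iota> -` S)" for K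
  proof -
    have "\<iota> -` \<Union>K = \<Union>((vimage \<iota>) ` K)" by auto
    moreover have "openin PT (\<Union>((vimage \<iota>) ` K))" using K by (intro openin_Union) auto
    ultimately show ?thesis using K by auto
  qed
  have ist: "istopology (\<lambda>S. S \<subseteq> range \<iota> \<and> openin PT (\<iota> -` S))"
    unfolding istopology_def using i1 i2 by meson
  have openK: "openin Kt S \<longleftrightarrow> S \<subseteq> range \<iota> \<and> openin PT (\<iota> -` S)" for S
    unfolding Kt_def using ist by simp
  have topK: "topspace Kt = range \<iota>"
  proof
    have "openin Kt (topspace Kt)" by (rule openin_topspace)
    then show "topspace Kt \<subseteq> range \<iota>" using openK[of "topspace Kt"] by blast
    have "\<iota> -` range \<iota> = topspace PT" by auto
    then have "openin PT (\<iota> -` range \<iota>)" by (metis openin_topspace)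
    then have "openin Kt (range \<iota>)" using openK by blast
    then show "range \<iota> \<subseteq> topspace Kt" by (rule openin_subset)
  qed
  have c\<iota>: "continuous_map PT Kt \<iota>"
    unfolding continuous_map_def using openK topK by (auto simp: vimage_def)
  have c\<rho>: "continuous_map Kt PT \<rho>"
    unfolding continuous_map_def
  proof (intro conjI allI impI)
    show "\<rho> \<in> topspace Kt \<rightarrow> topspace PT" by simp
    fix U assume U: "openin PT U"
    have "{y \<in> topspace Kt. \<rho> y \<in> U} = \<iota> ` U" using topK by auto
    moreover have "\<iota> -` (\<iota> ` U) = U" using inj\<iota> by (simp add: inj_vimage_image_eq)
    ultimately show "openin Kt {y \<in> topspace Kt. \<rho> y \<in> U}" using openK U by auto
  qed
  have hm: "homeomorphic_maps PT Kt \<iota> \<rho>"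
    unfolding homeomorphic_maps_def using c\<iota> c\<rho> topK
    by (auto simp: \<rho>_def f_inv_into_f inv_f_f[OF inj\<iota>])
  then have h\<iota>: "homeomorphic_map PT Kt \<iota>" and h\<rho>: "homeomorphic_map Kt PT \<rho>"
    using homeomorphic_maps_map by blast+
  have hs: "PT homeomorphic_space Kt" using hm homeomorphic_space_def by blast
  have cK: "compact_metric_space Kt"
    unfolding compact_metric_space_def
    using homeomorphic_compact_space[OF hs] homeomorphic_metrizable_space[OF hs] compact_PT metrizable_PT
    by simp
  have neK: "topspace Kt \<noteq> {}" using topK by simp
  define g' where "g' = gmap x \<circ> \<rho>"
  have cg: "continuous_map Kt euclidean g'"
    unfolding g'_def by (rule continuous_map_compose[OF c\<rho> continuous_gmap[OF inv hx]])
  have "meagre_in Kt {k \<in> topspace Kt. g' k \<in> translate A z}" for z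
  proof -
    define Bz where "Bz = {w. gmap x w - z \<in> A}"
    have eq: "{k \<in> topspace Kt. g' k \<in> translate A z} = \<iota> ` Bz"
      unfolding Bz_def g'_def using topK by (auto simp: mem_translate)
    have "baire_property_in Kt {k \<in> topspace Kt. g' k \<in> translate A z}"
      using UB cK cg unfolding universally_Baire_def by blast
    then have "baire_property_in PT (\<rho> ` (\<iota> ` Bz))"
      unfolding eq by (rule baire_property_homeo[OF h\<rho>])
    moreover have "\<rho> ` (\<iota> ` Bz) = Bz" by (simp add: image_image)
    ultimately have "baire_property_in PT Bz" by simp
    moreover have "\<forall>w\<in>Bz. finite {n. \<not> w n \<and> flipc n w \<in> Bz}"
      unfolding Bz_def by (rule phi_lemma[OF inv hx nf order_refl])
    ultimately have "meagre_in PT Bz" by (rule baire_core)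
    then have "meagre_in Kt (\<iota> ` Bz)" by (rule meagre_homeo[OF h\<iota>])
    then show ?thesis using eq by simp
  qed
  then show ?thesis
    unfolding Haar_meagre_def using UB cK neK cg by blast
qed

lemma measurable_minus_const: "(\<lambda>v::'a. v - z) \<in> borel_measurable borel"
  if inv: "\<forall>a b c::'a::{ab_group_add, metric_space}. dist (a + c) (b + c) = dist a b"
proof -
  have "continuous_on UNIV (\<lambda>v::'a. v + (- z))"
    unfolding continuous_on_iff using inv by metis
  then show ?thesis using borel_measurable_continuous_onI by (simp add: diff_conv_add_uminus[symmetric])
qed

lemma measure_branch:
  fixes x :: "nat \<Rightarrow> 'a::{ab_group_add, metric_space, complete_space}"
  assumes inv: "\<forall>a b c::'a. dist (a + c) (b + c) = dist a b"
    and hx: "\<forall>n. dist (x n) 0 \<le> (1/2)^n"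
    and nf: "\<forall>y. finite {n. y + x n \<in> A}"
    and UM: "universally_measurable A"
  shows "Haar_null A"
proof -
  have mg: "gmap x \<in> borel_measurable PM" by (rule measurable_gmap[OF inv hx])
  define \<mu> where "\<mu> = distr PM borel (gmap x)"
  have bp: "borel_prob \<mu>"
    unfolding borel_prob_def \<mu>_def using PMi.prob_space_distr[OF mg] by simp
  have "emeasure (completion \<mu>) (translate A z) = 0" for z
  proof -
    have mt: "(\<lambda>v::'a. v - z) \<in> borel_measurable borel" by (rule measurable_minus_const[OF inv])
    have mgz: "(\<lambda>w. gmap x w - z) \<in> borel_measurable PM"
      using measurable_compose[OF mg mt] by (simp add: o_def)
    define \<mu>z where "\<mu>z = distr PM borel (\<lambda>w. gmap x w - z)"
    have bpz: "borel_prob \<mu>z"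
      unfolding borel_prob_def \<mu>z_def using PMi.prob_space_distr[OF mgz] by simp
    then have "A \<in> sets (completion \<mu>z)" using UM unfolding universally_measurable_def by blast
    then obtain S Nn N' where SN: "A = S \<union> Nn" "S \<in> sets \<mu>z" "N' \<in> null_sets \<mu>z" "Nn \<subseteq> N'"
      unfolding sets_completion by blast
    have Sb: "S \<in> sets borel" using SN(2) unfolding \<mu>z_def by simp
    have N'b: "N' \<in> sets borel" using SN(3) unfolding \<mu>z_def null_sets_def by simp
    have N'0: "emeasure \<mu>z N' = 0" using SN(3) by (simp add: null_sets_def)
    define S' where "S' = (\<lambda>v. v - z) -` S"
    define N'' where "N'' = (\<lambda>v. v - z) -` N'"
    have S'b: "S' \<in> sets borel" unfolding S'_def using measurable_sets[OF mt Sb] by simp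
    have N''b: "N'' \<in> sets borel" unfolding N''_def using measurable_sets[OF mt N'b] by simp
    have sub: "translate A z \<subseteq> S' \<union> N''"
      unfolding S'_def N''_def using SN(1,4) by (auto simp: mem_translate)
    have "emeasure \<mu> N'' = emeasure \<mu>z N'"
      unfolding \<mu>_def \<mu>z_def N''_def
      using mg mgz N'b measurable_sets[OF mt N'b]
      by (simp add: emeasure_distr vimage_def)
    then have eN: "emeasure \<mu> N'' = 0" using N'0 by simp
    define E where "E = {w. gmap x w - z \<in> S}"
    have ES: "E \<in> sets PM"
      using measurable_sets[OF mgz Sb] unfolding E_def by (simp add: vimage_def)
    have "emeasure \<mu> S' = emeasure PM E"
      unfolding \<mu>_def S'_def E_def using mg S'b[unfolded S'_def]
      by (simp add: emeasure_distr vimage_def)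
    also have "\<dots> = 0"
    proof -
      have SA: "S \<subseteq> A" using SN(1) by blast
      have "measure PM E = 0"
        by (rule measure_core[OF ES]) (unfold E_def, rule phi_lemma[OF inv hx nf SA])
      then show ?thesis using PMi.emeasure_eq_measure by simp
    qed
    finally have eS: "emeasure \<mu> S' = 0" .
    have US: "S' \<union> N'' \<in> sets \<mu>" unfolding \<mu>_def using S'b N''b by simp
    have "emeasure (completion \<mu>) (translate A z) \<le> emeasure (completion \<mu>) (S' \<union> N'')"
      by (rule emeasure_mono[OF sub]) (use US in simp)
    also have "\<dots> = emeasure \<mu> (S' \<union> N'')" using US by simp
    also have "\<dots> \<le> emeasure \<mu> S' + emeasure \<mu> N''"
      by (rule emeasure_subadditive) (use S'b N''b in \<open>auto simp: \<mu>_def\<close>)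
    also have "\<dots> = 0" using eS eN by simp
    finally show ?thesis by simp
  qed
  then show ?thesis unfolding Haar_null_def using UM bp by blast
qed

theorem corollary2p4:
  fixes f :: "'a::{ab_group_add, metric_space, complete_space} \<Rightarrow> real"
    and T :: "'a set" and k :: nat
  assumes "invariant_metric TYPE('a)"
    and "subadditive f"
    and "\<exists>M. \<forall>t\<in>T. f t \<le> M"
    and "k \<ge> 1"
    and "(universally_Baire (kfold_sum k T) \<and> \<not> Haar_meagre (kfold_sum k T)) \<or>
         (universally_measurable (kfold_sum k T) \<and> \<not> Haar_null (kfold_sum k T))"
  shows "\<forall>p. locally_bounded_at f p"
proof -
  have inv: "\<forall>a b c::'a. dist (a + c) (b + c) = dist a b"
    using assms(1) unfolding invariant_metric_def by blast
  have sub: "subadditive f" by (rule assms(2))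
  obtain M where M: "\<forall>t\<in>T. f t \<le> M" using assms(3) by blast
  define A where "A = kfold_sum k T"
  define CA where "CA = \<bar>f 0\<bar> + real k * \<bar>M\<bar>"
  have fA: "f a \<le> CA" if aA: "a \<in> A" for a
  proof -
    obtain t where t: "a = (\<Sum>i<k. t i)" "\<forall>i<k. t i \<in> T"
      using aA unfolding A_def kfold_sum_def by blast
    then show ?thesis using kfold_bound[OF sub M, of k] unfolding CA_def by blast
  qed
  show ?thesis
  proof (cases "\<exists>r>0. \<exists>C. \<forall>v. dist v 0 < r \<longrightarrow> f v \<le> C")
    case True
    then obtain r C where "r > 0" "\<forall>v. dist v 0 < r \<longrightarrow> f v \<le> C" by blast
    then show ?thesis using lb_from_ball[OF inv sub] by blast
  next
    case False
    have "\<forall>n. \<exists>v. dist v 0 < (1/2::real)^n \<and> f v > real n"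
    proof
      fix n :: nat
      have "(0::real) < (1/2)^n" by simp
      then have "\<not> (\<forall>v. dist v 0 < (1/2::real)^n \<longrightarrow> f v \<le> real n)" using False by blast
      then show "\<exists>v. dist v 0 < (1/2::real)^n \<and> f v > real n" by (auto simp: not_le)
    qed
    from choice[OF this] obtain x where x: "\<And>n. dist (x n) 0 < (1/2::real)^n" "\<And>n. f (x n) > real n"
      by blast
    have hx: "\<forall>n. dist (x n) 0 \<le> (1/2)^n" using x(1) less_imp_le by blast
    have nf: "\<forall>y. finite {n. y + x n \<in> A}"
    proof
      fix y
      have "{n. y + x n \<in> A} \<subseteq> {n. real n < CA + f (- y)}"
      proof
        fix n assume n: "n \<in> {n. y + x n \<in> A}"
        have "f (x n) = f ((y + x n) + (- y))" by simp
        also have "\<dots> \<le> f (y + x n) + f (- y)" using sub unfolding subadditive_def by blast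
        also have "\<dots> \<le> CA + f (- y)" using fA n by simp
        finally show "n \<in> {n. real n < CA + f (- y)}" using x(2)[of n] by simp
      qed
      then show "finite {n. y + x n \<in> A}" using finite_real_less finite_subset by blast
    qed
    from assms(5) have False
    proof
      assume h: "universally_Baire (kfold_sum k T) \<and> \<not> Haar_meagre (kfold_sum k T)"
      then have "Haar_meagre A" using baire_branch[OF inv hx nf] unfolding A_def by blast
      then show False using h unfolding A_def by blast
    next
      assume h: "universally_measurable (kfold_sum k T) \<and> \<not> Haar_null (kfold_sum k T)"
      then have "Haar_null A" using measure_branch[OF inv hx nf] unfolding A_def by blast
      then show False using h unfolding A_def by blast
    qed
    then show ?thesis by blast
  qed
qed


end
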